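(* Let $G$ be a block graph whose blocks are the cliques $K_{n_1},\dots,K_{n_r}$. Then $G$ admits a weak IASI and its sparing number is $\varphi(G)=\frac{1}{2}\sum_{i=1}^r (n_i-1)(n_i-2)$.
   Context: A block graph (clique tree) is a connected graph in which every block (maximal 2-connected subgraph or bridge) is a clique; here $r$ is the number of these cliques and $n_i$ the order of the $i$-th one. Let $\mathbb{N}_0$ be the set of non-negative integers; for $A,B\subseteq\mathbb{N}_0$, $A+B=\{a+b:a\in A,b\in B\}$. An integer additive set-indexer (IASI) of a graph $G$ is an injective map $f:V(G)\to\mathcal{P}(\mathbb{N}_0)$ such that $f^+:E(G)\to\mathcal{P}(\mathbb{N}_0)$, $f^+(uv)=f(u)+f(v)$, is injective. A weak IASI is an IASI with $|f^+(uv)|=\max(|f(u)|,|f(v)|)$ for every edge $uv$. An edge $e$ is mono-indexed if $|f^+(e)|=1$. The sparing number $\varphi(G)$ is the minimum number of mono-indexed edges over all weak IASIs of $G$. *)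

theory Defs
  imports Complex_Main
begin

definition graph :: "'a set \<Rightarrow> 'a set set \<Rightarrow> bool" where
  "graph V E \<longleftrightarrow> finite V \<and> (\<forall>e\<in>E. \<exists>u v. e = {u, v} \<and> u \<noteq> v \<and> u \<in> V \<and> v \<in> V)"

definition connected_on :: "'a set set \<Rightarrow> 'a set \<Rightarrow> bool" where
  "connected_on E W \<longleftrightarrow> W \<noteq> {} \<and>
     (\<forall>u\<in>W. \<forall>v\<in>W. (\<lambda>x y. x \<in> W \<and> y \<in> W \<and> {x, y} \<in> E)\<^sup>*\<^sup>* u v)"

text \<open>Induced subgraph on W (with at least 2 vertices) is connected and has no cut vertex.
  With 2 vertices this is a single edge (a bridge, if maximal); with at least 3 vertices
  it is 2-connectedness.\<close>
definition nonseparable :: "'a set set \<Rightarrow> 'a set \<Rightarrow> bool" where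
  "nonseparable E W \<longleftrightarrow> 2 \<le> card W \<and> connected_on E W \<and> (\<forall>v\<in>W. connected_on E (W - {v}))"

definition is_block :: "'a set \<Rightarrow> 'a set set \<Rightarrow> 'a set \<Rightarrow> bool" where
  "is_block V E W \<longleftrightarrow> W \<subseteq> V \<and> nonseparable E W \<and>
     (\<forall>W'. W \<subseteq> W' \<and> W' \<subseteq> V \<and> nonseparable E W' \<longrightarrow> W' = W)"

definition blocks :: "'a set \<Rightarrow> 'a set set \<Rightarrow> 'a set set" where
  "blocks V E = {W. is_block V E W}"

definition is_clique :: "'a set set \<Rightarrow> 'a set \<Rightarrow> bool" where
  "is_clique E W \<longleftrightarrow> (\<forall>u\<in>W. \<forall>v\<in>W. u \<noteq> v \<longrightarrow> {u, v} \<in> E)"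

definition block_graph :: "'a set \<Rightarrow> 'a set set \<Rightarrow> bool" where
  "block_graph V E \<longleftrightarrow> graph V E \<and> connected_on E V \<and> (\<forall>W\<in>blocks V E. is_clique E W)"

definition sumset :: "nat set \<Rightarrow> nat set \<Rightarrow> nat set" where
  "sumset A B = {a + b | a b. a \<in> A \<and> b \<in> B}"

definition iasi :: "'a set \<Rightarrow> 'a set set \<Rightarrow> ('a \<Rightarrow> nat set) \<Rightarrow> bool" where
  "iasi V E f \<longleftrightarrow> inj_on f V \<and> (\<forall>v\<in>V. finite (f v)) \<and>
     (\<forall>u v x y. {u, v} \<in> E \<longrightarrow> {x, y} \<in> E \<longrightarrow>
        sumset (f u) (f v) = sumset (f x) (f y) \<longrightarrow> {u, v} = {x, y})"

definition weak_iasi :: "'a set \<Rightarrow> 'a set set \<Rightarrow> ('a \<Rightarrow> nat set) \<Rightarrow> bool" where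
  "weak_iasi V E f \<longleftrightarrow> iasi V E f \<and>
     (\<forall>u v. {u, v} \<in> E \<longrightarrow> card (sumset (f u) (f v)) = max (card (f u)) (card (f v)))"

definition mono_indexed_edges :: "'a set set \<Rightarrow> ('a \<Rightarrow> nat set) \<Rightarrow> 'a set set" where
  "mono_indexed_edges E f = {e \<in> E. \<exists>u v. e = {u, v} \<and> card (sumset (f u) (f v)) = 1}"

definition sparing_number :: "'a set \<Rightarrow> 'a set set \<Rightarrow> nat" where
  "sparing_number V E = (LEAST k. \<exists>f. weak_iasi V E f \<and> card (mono_indexed_edges E f) = k)"

end

theory Submission
  imports Defs
begin


definition reach :: "'a set set \<Rightarrow> 'a set \<Rightarrow> 'a \<Rightarrow> 'a \<Rightarrow> bool" where
  "reach E A = (\<lambda>x y. x \<in> A \<and> y \<in> A \<and> {x, y} \<in> E)\<^sup>*\<^sup>*"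

lemma conn_def: "connected_on E W \<longleftrightarrow> W \<noteq> {} \<and> (\<forall>u\<in>W. \<forall>v\<in>W. reach E W u v)"
  unfolding connected_on_def reach_def by simp

lemma reach_refl[simp]: "reach E A x x" unfolding reach_def by simp

lemma reach_edge: "x \<in> A \<Longrightarrow> y \<in> A \<Longrightarrow> {x,y} \<in> E \<Longrightarrow> reach E A x y"
  unfolding reach_def by (rule r_into_rtranclp) simp

lemma reach_trans: "reach E A x y \<Longrightarrow> reach E A y z \<Longrightarrow> reach E A x z"
  unfolding reach_def by (rule rtranclp_trans)

lemma reach_step: "reach E A x y \<Longrightarrow> y \<in> A \<Longrightarrow> z \<in> A \<Longrightarrow> {y,z} \<in> E \<Longrightarrow> reach E A x z"
  using reach_trans reach_edge by metis

lemma reach_mono: "reach E A x y \<Longrightarrow> A \<subseteq> B \<Longrightarrow> reach E B x y"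
  unfolding reach_def
  by (induction rule: rtranclp_induct) (auto intro: rtranclp.rtrancl_into_rtrancl)

lemma reach_sym: "reach E A x y \<Longrightarrow> reach E A y x"
  unfolding reach_def
proof (induction rule: rtranclp_induct)
  case base then show ?case by simp
next
  case (step y z)
  then have "(\<lambda>x y. x \<in> A \<and> y \<in> A \<and> {x, y} \<in> E) z y" by (simp add: insert_commute)
  then show ?case using step(3) by (rule converse_rtranclp_into_rtranclp)
qed

lemma reach_in: "reach E A x y \<Longrightarrow> x \<noteq> y \<Longrightarrow> y \<in> A"
  unfolding reach_def by (induction rule: rtranclp_induct) auto


lemma reach_prefix: "reach E A s t \<Longrightarrow> reach E {z\<in>A. reach E A s z} s t"
proof -
  assume "reach E A s t"
  then have "(\<lambda>x y. x \<in> A \<and> y \<in> A \<and> {x, y} \<in> E)\<^sup>*\<^sup>* s t" by (simp add: reach_def)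
  then show ?thesis
  proof (induction rule: rtranclp_induct)
    case base then show ?case by simp
  next
    case (step y z)
    have ry: "reach E A s y" using step(1) by (simp add: reach_def)
    have "(\<lambda>x y. x \<in> A \<and> y \<in> A \<and> {x, y} \<in> E)\<^sup>*\<^sup>* s z"
      using step(1) step(2) by (rule rtranclp.rtrancl_into_rtrancl)
    then have rz: "reach E A s z" by (simp add: reach_def)
    have yC: "y \<in> {z\<in>A. reach E A s z}" using step(2) ry by simp
    have zC: "z \<in> {z\<in>A. reach E A s z}" using step(2) rz by simp
    show ?case using reach_step[OF step(3) yC zC] step(2) by simp
  qed
qed

lemma reach_closed:
  assumes "reach E A s t" "s \<in> C" "\<forall>c\<in>C. \<forall>z\<in>A. {c,z} \<in> E \<longrightarrow> z \<in> C"
  shows "t \<in> C"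
proof -
  have "(\<lambda>x y. x \<in> A \<and> y \<in> A \<and> {x, y} \<in> E)\<^sup>*\<^sup>* s t" using assms(1) by (simp add: reach_def)
  then show ?thesis
  proof (induction rule: rtranclp_induct)
    case base then show ?case using assms(2) .
  next
    case (step y z)
    then show ?case using assms(3) by blast
  qed
qed

lemma reach_escape:
  assumes "reach E A s t" "s \<in> A" "s \<notin> K"
    "\<forall>k\<in>K. \<forall>u\<in>A. {k,u} \<in> E \<longrightarrow> u \<in> K \<or> u = w"
  shows "(t \<notin> K \<and> reach E (A - K) s t) \<or> reach E (A - K) s w"
proof -
  have "(\<lambda>x y. x \<in> A \<and> y \<in> A \<and> {x, y} \<in> E)\<^sup>*\<^sup>* s t" using assms(1) by (simp add: reach_def)
  then show ?thesis
  proof (induction rule: rtranclp_induct)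
    case base then show ?case using assms by simp
  next
    case (step y z)
    show ?case
    proof (cases "reach E (A - K) s w")
      case False
      then have y: "y \<notin> K" "reach E (A - K) s y" using step by auto
      show ?thesis
      proof (cases "z \<in> K")
        case True
        then have "y \<in> K \<or> y = w" using assms(4) step(2) by (auto simp: insert_commute)
        then show ?thesis using y by auto
      next
        case False
        then show ?thesis using y step(2) by (auto intro: reach_step)
      qed
    qed simp
  qed
qed

lemma conn_union:
  assumes "connected_on E A" "connected_on E B" "A \<inter> B \<noteq> {}"
  shows "connected_on E (A \<union> B)"
proof -
  obtain c where c: "c \<in> A" "c \<in> B" using assms(3) by auto
  have "reach E (A \<union> B) u c" if "u \<in> A \<union> B" for u
  proof (cases "u \<in> A")
    case True
    then have "reach E A u c" using assms(1) c unfolding conn_def by blast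
    then show ?thesis by (rule reach_mono) auto
  next
    case False
    then have "u \<in> B" using that by auto
    then have "reach E B u c" using assms(2) c unfolding conn_def by blast
    then show ?thesis by (rule reach_mono) auto
  qed
  then have "reach E (A \<union> B) u v" if "u \<in> A \<union> B" "v \<in> A \<union> B" for u v
    using that reach_sym reach_trans by metis
  moreover have "A \<union> B \<noteq> {}" using c by auto
  ultimately show ?thesis unfolding conn_def by blast
qed

lemma clique_conn: "is_clique E K \<Longrightarrow> K \<noteq> {} \<Longrightarrow> connected_on E K"
proof -
  assume a: "is_clique E K" "K \<noteq> {}"
  have "reach E K u v" if "u \<in> K" "v \<in> K" for u v
  proof (cases "u = v")
    case False
    then show ?thesis using a that unfolding is_clique_def by (intro reach_edge) auto
  qed simp
  then show ?thesis using a(2) unfolding conn_def by blast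
qed

lemma clique_nonsep:
  assumes "is_clique E K" "finite K" "card K \<ge> 2"
  shows "nonseparable E K"
proof -
  have "K \<noteq> {}" using assms by auto
  moreover have "K - {v} \<noteq> {}" for v
  proof
    assume "K - {v} = {}"
    then have "K \<subseteq> {v}" by auto
    then have "card K \<le> 1" using card_mono[of "{v}" K] by simp
    then show False using assms by simp
  qed
  moreover have "is_clique E (K - {v})" for v using assms(1) unfolding is_clique_def by auto
  ultimately show ?thesis unfolding nonseparable_def using assms clique_conn by blast
qed

lemma nonsep_union:
  assumes "nonseparable E X" "nonseparable E Y" "finite (X \<inter> Y)" "card (X \<inter> Y) \<ge> 2" "finite (X \<union> Y)"
  shows "nonseparable E (X \<union> Y)"
proof -
  have ne: "X \<inter> Y - {w} \<noteq> {}" for w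
  proof
    assume "X \<inter> Y - {w} = {}"
    then have "X \<inter> Y \<subseteq> {w}" by auto
    then have "card (X \<inter> Y) \<le> 1" using card_mono[of "{w}" "X \<inter> Y"] by simp
    then show False using assms by simp
  qed
  have "X \<inter> Y \<noteq> {}" using ne by auto
  then have c: "connected_on E (X \<union> Y)" using assms conn_union unfolding nonseparable_def by blast
  have "card X \<le> card (X \<union> Y)" using assms(5) by (simp add: card_mono)
  then have cd: "2 \<le> card (X \<union> Y)" using assms(1) unfolding nonseparable_def by simp
  have "connected_on E (X \<union> Y - {w})" if "w \<in> X \<union> Y" for w
  proof -
    have cx: "connected_on E (X - {w})" using assms(1) unfolding nonseparable_def
      by (cases "w \<in> X") auto
    have cy: "connected_on E (Y - {w})" using assms(2) unfolding nonseparable_def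
      by (cases "w \<in> Y") auto
    have "(X - {w}) \<inter> (Y - {w}) \<noteq> {}" using ne by auto
    then have "connected_on E ((X - {w}) \<union> (Y - {w}))" using cx cy conn_union by blast
    moreover have "(X - {w}) \<union> (Y - {w}) = X \<union> Y - {w}" by auto
    ultimately show ?thesis by simp
  qed
  then show ?thesis using c cd unfolding nonseparable_def by blast
qed

lemma extend_block:
  assumes "finite V" "W \<subseteq> V" "nonseparable E W"
  shows "\<exists>B. is_block V E B \<and> W \<subseteq> B"
proof -
  let ?S = "{W'. W \<subseteq> W' \<and> W' \<subseteq> V \<and> nonseparable E W'}"
  have "?S \<subseteq> Pow V" by auto
  then have "finite ?S" using assms(1) by (meson finite_Pow_iff finite_subset)
  moreover have "?S \<noteq> {}" using assms by auto
  ultimately obtain B where B: "B \<in> ?S" "\<forall>b\<in>?S. B \<le> b \<longrightarrow> B = b"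
    using finite_has_maximal[of ?S] by meson
  then have "is_block V E B" unfolding is_block_def by auto
  then show ?thesis using B by auto
qed



lemma noncut:
  assumes "finite V" "connected_on E V" "2 \<le> card V"
  shows "\<exists>v\<in>V. connected_on E (V - {v})"
proof -
  obtain r where r: "r \<in> V" using assms(2) unfolding conn_def by blast
  define D where "D v = {y \<in> V - {v}. \<not> reach E (V - {v}) r y}" for v
  have "V \<noteq> {r}" using assms(3) by auto
  then obtain v0 where "v0 \<in> V - {r}" using r by blast
  then obtain v where v: "v \<in> V - {r}" and vmin: "\<forall>u. u \<in> V - {r} \<longrightarrow> card (D v) \<le> card (D u)"
    using ex_has_least_nat[of "\<lambda>v. v \<in> V - {r}" v0 "\<lambda>v. card (D v)"] by blast
  have Dv: "D v = {}"
  proof (rule ccontr)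
    assume "D v \<noteq> {}"
    then obtain y where y: "y \<in> D v" by blast
    then have yV: "y \<in> V" "y \<noteq> v" and ny: "\<not> reach E (V - {v}) r y" by (auto simp: D_def)
    have yr: "y \<noteq> r" using ny by auto
    define C where "C = {z \<in> V - {v}. reach E (V - {v}) r z}"
    have yC: "y \<notin> C" using ny by (simp add: C_def)
    have rC: "r \<in> C" using r v by (auto simp: C_def)
    have CV: "C \<subseteq> V - {y}" using yC by (auto simp: C_def)
    have "\<exists>c\<in>C. {c,v} \<in> E"
    proof (rule ccontr)
      assume nc: "\<not> (\<exists>c\<in>C. {c,v} \<in> E)"
      have closed: "\<forall>c\<in>C. \<forall>z\<in>V. {c,z}\<in>E \<longrightarrow> z \<in> C"
      proof (intro ballI impI)
        fix c z assume cz: "c\<in>C" "z\<in>V" "{c,z}\<in>E"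
        then have zv: "z \<noteq> v" using nc by auto
        have "reach E (V-{v}) r c" "c \<in> V - {v}" using cz(1) by (auto simp: C_def)
        then have "reach E (V-{v}) r z" using reach_step[of E "V-{v}" r c z] cz zv by blast
        then show "z \<in> C" using cz zv by (simp add: C_def)
      qed
      have "reach E V r v" using assms(2) r v unfolding conn_def by blast
      then have "v \<in> C" using reach_closed[OF _ rC closed] by blast
      then show False by (simp add: C_def)
    qed
    then obtain c where c: "c \<in> C" "{c,v} \<in> E" by blast
    have "reach E (V - {v}) r c" using c(1) by (simp add: C_def)
    then have "reach E C r c" using reach_prefix[of E "V - {v}" r c] by (simp add: C_def)
    then have "reach E (V - {y}) r c" using CV by (rule reach_mono)
    moreover have "c \<in> V - {y}" using c CV by blast
    moreover have "v \<in> V - {y}" using v yV by blast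
    ultimately have rv: "reach E (V - {y}) r v" using c(2) by (rule reach_step)
    have sub: "D y \<subseteq> D v"
    proof
      fix z assume "z \<in> D y"
      then have z: "z \<in> V" "z \<noteq> y" "\<not> reach E (V - {y}) r z" by (auto simp: D_def)
      have zv: "z \<noteq> v" using rv z(3) by auto
      moreover have "\<not> reach E (V-{v}) r z"
      proof
        assume "reach E (V-{v}) r z"
        then have "reach E C r z" using reach_prefix[of E "V - {v}" r z] by (simp add: C_def)
        then have "reach E (V-{y}) r z" using CV by (rule reach_mono)
        then show False using z(3) by simp
      qed
      ultimately show "z \<in> D v" using z by (simp add: D_def)
    qed
    have "y \<notin> D y" by (simp add: D_def)
    then have "D y \<subset> D v" using sub y by blast
    moreover have "finite (D v)" using assms(1) by (simp add: D_def)
    ultimately have "card (D y) < card (D v)" by (rule psubset_card_mono[rotated])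
    moreover have "card (D v) \<le> card (D y)" using vmin yV yr by blast
    ultimately show False by simp
  qed
  have "reach E (V - {v}) a b" if "a \<in> V - {v}" "b \<in> V - {v}" for a b
  proof -
    have "reach E (V - {v}) r a" "reach E (V - {v}) r b" using Dv that by (auto simp: D_def)
    then show ?thesis using reach_sym reach_trans by metis
  qed
  moreover have "V - {v} \<noteq> {}" using r v by blast
  ultimately show ?thesis using v unfolding conn_def by blast
qed



lemma lemK:
  assumes fin: "finite V" and xV: "x \<in> V" and aV: "a \<in> V - {x}" and bV: "b \<in> V - {x}" and ab: "a \<noteq> b"
    and xa: "{x,a} \<in> E" and xb: "{x,b} \<in> E"
    and rab: "reach E (V - {x}) a b" and bg: "\<forall>W. W \<subseteq> V \<longrightarrow> nonseparable E W \<longrightarrow> is_clique E W"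
  shows "{a,b} \<in> E"
proof -
  let ?RR = "{R. R \<subseteq> V - {x} \<and> a \<in> R \<and> b \<in> R \<and> connected_on E R}"
  define R0 where "R0 = {z \<in> V - {x}. reach E (V - {x}) a z}"
  have R0a: "\<forall>u\<in>R0. reach E R0 a u"
    using reach_prefix[of E "V - {x}" a] by (simp add: R0_def)
  have "R0 \<in> ?RR"
  proof -
    have "a \<in> R0" "b \<in> R0" using aV bV rab by (auto simp: R0_def)
    moreover have "reach E R0 u w" if "u \<in> R0" "w \<in> R0" for u w
      using R0a that reach_sym reach_trans by metis
    ultimately show ?thesis unfolding conn_def R0_def by auto
  qed
  then obtain R where R: "R \<in> ?RR" and Rmin: "\<forall>R'. R' \<in> ?RR \<longrightarrow> card R \<le> card R'"
    using ex_has_least_nat[of "\<lambda>R. R \<in> ?RR" R0 card] by blast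
  have Rsub: "R \<subseteq> V - {x}" and aR: "a \<in> R" and bR: "b \<in> R" and Rc: "connected_on E R" using R by auto
  have finR: "finite R" using Rsub fin finite_subset by blast
  have xR: "x \<notin> R" using Rsub by blast
  have key: "(a \<noteq> w \<and> reach E (R-{w}) y a) \<or> (b \<noteq> w \<and> reach E (R-{w}) y b)"
    if w: "w \<in> R" and y: "y \<in> R - {w}" for w y
  proof (rule ccontr)
    assume n: "\<not> ((a \<noteq> w \<and> reach E (R-{w}) y a) \<or> (b \<noteq> w \<and> reach E (R-{w}) y b))"
    define K where "K = {z \<in> R - {w}. reach E (R - {w}) y z}"
    have aK: "a \<notin> K"
    proof
      assume "a \<in> K"
      then have "a \<noteq> w" "reach E (R-{w}) y a" by (auto simp: K_def)
      then show False using n by blast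
    qed
    have bK: "b \<notin> K"
    proof
      assume "b \<in> K"
      then have "b \<noteq> w" "reach E (R-{w}) y b" by (auto simp: K_def)
      then show False using n by blast
    qed
    have yK: "y \<in> K" using y by (simp add: K_def)
    have wK: "w \<notin> K" by (simp add: K_def)
    have clos: "\<forall>k\<in>K. \<forall>u\<in>R. {k,u} \<in> E \<longrightarrow> u \<in> K \<or> u = w"
    proof (intro ballI impI)
      fix k u assume k: "k \<in> K" and u: "u \<in> R" and e: "{k,u} \<in> E"
      show "u \<in> K \<or> u = w"
      proof (cases "u = w")
        case False
        have "reach E (R - {w}) y k" "k \<in> R - {w}" using k by (auto simp: K_def)
        then have "reach E (R - {w}) y u" using reach_step[of E "R-{w}" y k u] u False e by blast
        then show ?thesis using u False by (simp add: K_def)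
      qed simp
    qed
    define R' where "R' = R - K"
    have "R' \<in> ?RR"
    proof -
      have "reach E R' z w" if z: "z \<in> R'" for z
      proof -
        have "reach E R z w" using Rc z w unfolding conn_def R'_def by blast
        then have "(w \<notin> K \<and> reach E (R - K) z w) \<or> reach E (R - K) z w"
          using reach_escape[of E R z w K w] z clos by (auto simp: R'_def)
        then show ?thesis by (auto simp: R'_def)
      qed
      then have "reach E R' u v" if "u \<in> R'" "v \<in> R'" for u v
        using that reach_sym reach_trans by metis
      moreover have "a \<in> R'" "b \<in> R'" using aR bR aK bK by (auto simp: R'_def)
      moreover have "R' \<subseteq> V - {x}" using Rsub by (auto simp: R'_def)
      ultimately show ?thesis unfolding conn_def by auto
    qed
    moreover have "card R' < card R"
    proof -
      have "R' \<subset> R" using yK y by (auto simp: R'_def K_def)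
      then show ?thesis using finR by (simp add: psubset_card_mono)
    qed
    ultimately show False using Rmin by (meson not_less)
  qed
  have ns: "nonseparable E (insert x R)"
  proof -
    have finI: "finite (insert x R)" using finR by simp
    have ax: "a \<noteq> x" using aV by blast
    have "card {a, x} \<le> card (insert x R)" using finI aR by (intro card_mono) auto
    then have c2: "2 \<le> card (insert x R)" using ax by simp
    have cl: "is_clique E {x, a}" using xa unfolding is_clique_def by (auto simp: insert_commute)
    have "connected_on E ({x,a} \<union> R)"
      using conn_union[OF clique_conn[OF cl] Rc] aR by blast
    moreover have "{x,a} \<union> R = insert x R" using aR by blast
    ultimately have cI: "connected_on E (insert x R)" by simp
    have "connected_on E (insert x R - {w})" if wI: "w \<in> insert x R" for w
    proof (cases "w = x")
      case True
      then show ?thesis using Rc xR by simp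
    next
      case False
      then have w: "w \<in> R" using wI by simp
      let ?A = "insert x R - {w}"
      have toX: "reach E ?A u x" if u: "u \<in> ?A" for u
      proof (cases "u = x")
        case False
        then have "u \<in> R - {w}" using u by simp
        from key[OF w this] obtain t where t: "t \<in> {a,b}" "t \<noteq> w" "reach E (R-{w}) u t" by blast
        have "reach E ?A u t" using t(3) by (rule reach_mono) auto
        moreover have "t \<in> ?A" using t aR bR by auto
        moreover have "x \<in> ?A" using \<open>w \<noteq> x\<close> by simp
        moreover have "{t, x} \<in> E" using t(1) xa xb by (auto simp: insert_commute)
        ultimately show ?thesis by (rule reach_step)
      qed simp
      have "reach E ?A u v" if "u \<in> ?A" "v \<in> ?A" for u v
        using toX[OF that(1)] toX[OF that(2)] reach_sym reach_trans by metis
      moreover have "?A \<noteq> {}" using \<open>w \<noteq> x\<close> by blast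
      ultimately show ?thesis unfolding conn_def by blast
    qed
    then show ?thesis using c2 cI unfolding nonseparable_def by blast
  qed
  have "insert x R \<subseteq> V" using Rsub xV by blast
  then have "is_clique E (insert x R)" using bg ns by blast
  then show ?thesis using aR bR ab unfolding is_clique_def by blast
qed

definition indep :: "'a set set \<Rightarrow> 'a set \<Rightarrow> bool" where
  "indep E I \<longleftrightarrow> (\<forall>u\<in>I. \<forall>w\<in>I. u \<noteq> w \<longrightarrow> {u, w} \<notin> E)"

definition maxclique :: "'a set set \<Rightarrow> 'a set \<Rightarrow> 'a set \<Rightarrow> bool" where
  "maxclique E V K \<longleftrightarrow> K \<subseteq> V \<and> is_clique E K \<and> (\<forall>K'. K \<subseteq> K' \<and> K' \<subseteq> V \<and> is_clique E K' \<longrightarrow> K' = K)"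

lemma hitting:
  "finite V \<Longrightarrow> connected_on E V \<Longrightarrow> (\<forall>W. W \<subseteq> V \<longrightarrow> nonseparable E W \<longrightarrow> is_clique E W) \<Longrightarrow>
   \<exists>I \<subseteq> V. indep E I \<and> (\<forall>K. maxclique E V K \<and> 2 \<le> card K \<longrightarrow> K \<inter> I \<noteq> {})"
proof (induction "card V" arbitrary: V rule: less_induct)
  case less
  show ?case
  proof (cases "card V < 2")
    case True
    have "\<not> (maxclique E V K \<and> 2 \<le> card K)" for K
    proof
      assume "maxclique E V K \<and> 2 \<le> card K"
      then have "K \<subseteq> V" "2 \<le> card K" by (auto simp: maxclique_def)
      then have "card K \<le> card V" using less.prems(1) by (simp add: card_mono)
      then show False using True \<open>2 \<le> card K\<close> by simp
    qed
    then show ?thesis unfolding indep_def by blast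
  next
    case False
    then obtain v where vV: "v \<in> V" and cv: "connected_on E (V - {v})"
      using noncut[OF less.prems(1,2)] by auto
    have h1: "card (V - {v}) < card V" using vV less.prems(1) by (meson card_Diff1_less)
    have h2: "finite (V - {v})" using less.prems(1) by simp
    have h3: "\<forall>W. W \<subseteq> V - {v} \<longrightarrow> nonseparable E W \<longrightarrow> is_clique E W" using less.prems(3) by blast
    obtain I' where I': "I' \<subseteq> V - {v}" "indep E I'"
      "\<forall>K. maxclique E (V - {v}) K \<and> 2 \<le> card K \<longrightarrow> K \<inter> I' \<noteq> {}"
      using less.hyps[OF h1 h2 cv h3] by blast
    define N where "N = {u \<in> V. u \<noteq> v \<and> {u,v} \<in> E}"
    have Ncl: "is_clique E (insert v N)"
      unfolding is_clique_def
    proof (intro ballI impI)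
      fix p q assume p: "p \<in> insert v N" and q: "q \<in> insert v N" and pq: "p \<noteq> q"
      show "{p, q} \<in> E"
      proof (cases "p = v")
        case True
        then show ?thesis using q pq by (auto simp: N_def insert_commute)
      next
        case pv: False
        show ?thesis
        proof (cases "q = v")
          case True
          then show ?thesis using p pq by (auto simp: N_def)
        next
          case qv: False
          have pN: "p \<in> V - {v}" "{v,p} \<in> E" using p pv by (auto simp: N_def insert_commute)
          have qN: "q \<in> V - {v}" "{v,q} \<in> E" using q qv by (auto simp: N_def insert_commute)
          have "reach E (V - {v}) p q" using cv pN qN unfolding conn_def by blast
          then show ?thesis using lemK[OF less.prems(1) vV pN(1) qN(1) pq pN(2) qN(2) _ less.prems(3)] by blast
        qed
      qed
    qed
    have NV: "insert v N \<subseteq> V" using vV by (auto simp: N_def)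
    have Kv: "K = insert v N" if "maxclique E V K" "v \<in> K" for K
    proof -
      have "K \<subseteq> insert v N" using that unfolding maxclique_def is_clique_def N_def by auto
      then show ?thesis using that Ncl NV unfolding maxclique_def by blast
    qed
    have Knv: "K \<inter> I' \<noteq> {}" if "maxclique E V K" "2 \<le> card K" "v \<notin> K" for K
    proof -
      have "maxclique E (V - {v}) K" using that unfolding maxclique_def by blast
      then show ?thesis using I'(3) that by blast
    qed
    show ?thesis
    proof (cases "I' \<inter> N = {}")
      case False
      have "K \<inter> I' \<noteq> {}" if "maxclique E V K \<and> 2 \<le> card K" for K
      proof (cases "v \<in> K")
        case True
        then have "K = insert v N" using Kv that by blast
        then show ?thesis using False by blast
      qed (use Knv that in blast)
      then show ?thesis using I' by blast
    next
      case True
      have "indep E (insert v I')"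
        unfolding indep_def
      proof (intro ballI impI)
        fix u w assume u: "u \<in> insert v I'" and w: "w \<in> insert v I'" and uw: "u \<noteq> w"
        show "{u, w} \<notin> E"
        proof (cases "u = v")
          case True
          then have "w \<in> I'" using w uw by auto
          have wN: "w \<notin> N" using \<open>I' \<inter> N = {}\<close> \<open>w \<in> I'\<close> by blast
          have "w \<in> V" "w \<noteq> v" using \<open>w \<in> I'\<close> I'(1) by auto
          then have "{w, v} \<notin> E" using wN by (simp add: N_def)
          then show ?thesis using True by (simp add: insert_commute)
        next
          case uv: False
          then have uI: "u \<in> I'" using u by auto
          show ?thesis
          proof (cases "w = v")
            case True
            have uN: "u \<notin> N" using \<open>I' \<inter> N = {}\<close> uI by blast
            have "u \<in> V" "u \<noteq> v" using uI I'(1) by auto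
            then have "{u, v} \<notin> E" using uN by (simp add: N_def)
            then show ?thesis using True by simp
          next
            case False
            then have "w \<in> I'" using w by auto
            then show ?thesis using uI uw I'(2) unfolding indep_def by blast
          qed
        qed
      qed
      moreover have "K \<inter> insert v I' \<noteq> {}" if "maxclique E V K \<and> 2 \<le> card K" for K
        using Knv that by blast
      moreover have "insert v I' \<subseteq> V" using I'(1) vV by blast
      ultimately show ?thesis by blast
    qed
  qed
qed



lemma sumset_img: "sumset A B = (\<lambda>(a,b). a + b) ` (A \<times> B)"
  unfolding sumset_def by auto

lemma sumset_finite: "finite A \<Longrightarrow> finite B \<Longrightarrow> finite (sumset A B)"
  unfolding sumset_img by simp

lemma sumset_single_l: "sumset {p} B = (\<lambda>b. p + b) ` B"
  unfolding sumset_def by auto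

lemma sumset_single_r: "sumset A {q} = (\<lambda>a. a + q) ` A"
  unfolding sumset_def by auto

lemma sumset_empty: "sumset {} B = {}" "sumset A {} = {}"
  unfolding sumset_def by auto

lemma sumset_lower:
  assumes "finite A" "finite B" "A \<noteq> {}" "B \<noteq> {}"
  shows "card A + card B \<le> card (sumset A B) + 1"
proof -
  let ?L = "(\<lambda>a. a + Min B) ` A" and ?R = "(\<lambda>b. Max A + b) ` B"
  have cL: "card ?L = card A" by (rule card_image) (simp add: inj_on_def)
  have cR: "card ?R = card B" by (rule card_image) (simp add: inj_on_def)
  have int: "?L \<inter> ?R \<subseteq> {Max A + Min B}"
  proof
    fix z assume "z \<in> ?L \<inter> ?R"
    then obtain a b where ab: "a \<in> A" "b \<in> B" "z = a + Min B" "z = Max A + b" by blast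
    have "a \<le> Max A" using ab assms by simp
    moreover have "Min B \<le> b" using ab assms by simp
    ultimately show "z \<in> {Max A + Min B}" using ab by simp
  qed
  have "card (?L \<inter> ?R) \<le> 1" using card_mono[OF _ int] by simp
  moreover have "card ?L + card ?R = card (?L \<union> ?R) + card (?L \<inter> ?R)"
    using assms by (intro card_Un_Int) auto
  moreover have "?L \<union> ?R \<subseteq> sumset A B"
  proof -
    have "Min B \<in> B" "Max A \<in> A" using assms by auto
    then show ?thesis unfolding sumset_def by blast
  qed
  then have "card (?L \<union> ?R) \<le> card (sumset A B)"
    using sumset_finite[OF assms(1,2)] by (intro card_mono)
  ultimately show ?thesis using cL cR by linarith
qed

lemma weak_two:
  assumes w: "weak_iasi V E f" and u: "u \<in> V" and v: "v \<in> V" and uv: "u \<noteq> v" and e: "{u,v} \<in> E"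
  shows "card (f u) = 1 \<or> card (f v) = 1"
proof (rule ccontr)
  assume n: "\<not> (card (f u) = 1 \<or> card (f v) = 1)"
  have fin: "finite (f u)" "finite (f v)" using w u v unfolding weak_iasi_def iasi_def by auto
  have inj: "f u \<noteq> f v" using w u v uv unfolding weak_iasi_def iasi_def inj_on_def by blast
  have eq: "card (sumset (f u) (f v)) = max (card (f u)) (card (f v))" using w e unfolding weak_iasi_def by blast
  show False
  proof (cases "f u = {} \<or> f v = {}")
    case True
    then have "card (sumset (f u) (f v)) = 0" using sumset_empty by auto
    then have "f u = {}" "f v = {}" using eq fin by auto
    then show False using inj by simp
  next
    case False
    then have "card (f u) \<ge> 2" "card (f v) \<ge> 2" using n fin
      by (metis One_nat_def card_0_eq less_2_cases not_less)+
    moreover have "card (f u) + card (f v) \<le> card (sumset (f u) (f v)) + 1"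
      using sumset_lower fin False by blast
    ultimately show False using eq by (simp add: max_def split: if_splits)
  qed
qed

lemma sidon:
  fixes a b c d :: nat
  assumes "a \<noteq> b" "c \<noteq> d" "(2::nat)^a + 2^b = 2^c + 2^d"
  shows "{a,b} = {c,d}"
proof -
  have s: "(2::nat)^x + 2^y = or (2^x) (2^y)" if "x \<noteq> y" for x y
    using that by (intro disjunctive_add) (auto simp: bit_exp_iff)
  have bits: "{n. bit ((2::nat)^x + 2^y) n} = {x,y}" if "x \<noteq> y" for x y
    using that by (auto simp: s bit_or_iff bit_exp_iff)
  show ?thesis using bits[OF assms(1)] bits[OF assms(2)] assms(3) by simp
qed

lemma pair_ord:
  fixes p q r s :: nat
  assumes "p < q" "r < s" "{p,q} = {r,s}"
  shows "p = r \<and> q = s"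
  using assms by (metis doubleton_eq_iff less_asym)



lemma two_choose: "2 * (m choose 2) = m * (m - 1)"
proof (induction m)
  case (Suc m)
  have "(Suc m) choose 2 = (m choose 1) + (m choose 2)" by (simp add: numeral_2_eq_2)
  then show ?case using Suc by (cases m) (auto simp: algebra_simps)
qed simp

lemma choose_real:
  assumes "2 \<le> n"
  shows "real ((n - 1) choose 2) = (real n - 1) * (real n - 2) / 2"
proof -
  obtain k where n: "n = k + 2" using assms by (metis add.commute le_Suc_ex)
  have "2 * ((k + 1) choose 2) = (k + 1) * k" using two_choose[of "k+1"] by simp
  then have "2 * real ((k + 1) choose 2) = (real k + 1) * real k"
    by (metis of_nat_1 of_nat_add of_nat_mult of_nat_numeral)
  then show ?thesis using n by (simp add: algebra_simps)
qed

lemma graph_edge: "graph V E \<Longrightarrow> e \<in> E \<Longrightarrow> \<exists>u v. e = {u,v} \<and> u \<noteq> v \<and> u \<in> V \<and> v \<in> V"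
  unfolding graph_def by blast

lemma pair_nonsep: "{u,v} \<in> E \<Longrightarrow> u \<noteq> v \<Longrightarrow> nonseparable E {u,v}"
  by (rule clique_nonsep) (auto simp: is_clique_def insert_commute)



lemma sing_pair: "(a::nat) < b \<Longrightarrow> {s} \<noteq> {a,b}"
  by (metis doubleton_eq_iff insert_absorb2 less_irrefl)

lemma labeling:
  assumes gr: "graph V E" and IV: "I \<subseteq> V" and ind: "indep E I" and g: "inj_on g V"
  defines "f \<equiv> \<lambda>v. if v \<in> I then {(2::nat)^g v, 2^Suc (g v)} else {2^g v}"
  shows "weak_iasi V E f \<and> mono_indexed_edges E f \<subseteq> {e\<in>E. e \<inter> I = {}}"
proof -
  have lt: "(2::nat)^a + c < 2^Suc a + c" for a c by simp
  have edge2: "(u\<notin>I \<and> w\<notin>I \<and> u\<noteq>w \<and> u\<in>V \<and> w\<in>V \<and> sumset (f u) (f w) = {2^g u + 2^g w}) \<or>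
     (\<exists>p q. {u,w} = {p,q} \<and> p \<in> I \<and> q \<notin> I \<and> p\<in>V \<and> q\<in>V \<and> p\<noteq>q \<and>
        sumset (f u) (f w) = {2^g p + 2^g q, 2^Suc (g p) + 2^g q})"
    if e: "{u,w} \<in> E" for u w
  proof -
    obtain a b where ab: "{u,w} = {a,b}" "a \<noteq> b" "a \<in> V" "b \<in> V" using graph_edge[OF gr e] by blast
    then have uw: "u \<noteq> w" "u \<in> V" "w \<in> V" by (auto simp: doubleton_eq_iff)
    have "\<not> (u \<in> I \<and> w \<in> I)" using ind e uw unfolding indep_def by blast
    then consider "u \<notin> I" "w \<notin> I" | "u \<in> I" "w \<notin> I" | "w \<in> I" "u \<notin> I" by blast
    then show ?thesis
    proof cases
      case 1
      then show ?thesis using uw by (simp add: f_def sumset_single_l)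
    next
      case 2
      then have "sumset (f u) (f w) = {2^g u + 2^g w, 2^Suc (g u) + 2^g w}"
        by (simp add: f_def sumset_single_r)
      then show ?thesis using 2 uw by blast
    next
      case 3
      then have "sumset (f u) (f w) = {2^g w + 2^g u, 2^Suc (g w) + 2^g u}"
        by (auto simp: f_def sumset_single_l add.commute)
      moreover have "{u,w} = {w,u}" by (simp add: insert_commute)
      ultimately show ?thesis using 3 uw by blast
    qed
  qed
  have fin: "\<forall>v\<in>V. finite (f v)" by (simp add: f_def)
  have injf: "inj_on f V"
  proof (rule inj_onI)
    fix u w assume u: "u \<in> V" and w: "w \<in> V" and eq: "f u = f w"
    have cu: "card (f z) = (if z \<in> I then 2 else 1)" for z
    proof (cases "z \<in> I")
      case True
      have "(2::nat)^g z \<noteq> 2^Suc (g z)" by simp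
      then show ?thesis using True by (simp add: f_def)
    qed (simp add: f_def)
    have same: "u \<in> I \<longleftrightarrow> w \<in> I"
    proof -
      have "card (f u) = card (f w)" using eq by simp
      then show ?thesis unfolding cu by (cases "u \<in> I"; cases "w \<in> I") simp_all
    qed
    show "u = w"
    proof (cases "u \<in> I")
      case True
      then have wI: "w \<in> I" using same by blast
      have "f u = {(2::nat)^g u, 2^Suc (g u)}" "f w = {(2::nat)^g w, 2^Suc (g w)}"
        using True wI by (simp_all add: f_def)
      then have "{(2::nat)^g u, 2^Suc (g u)} = {2^g w, 2^Suc (g w)}" using eq by simp
      then have "(2::nat)^g u = 2^g w \<and> (2::nat)^Suc (g u) = 2^Suc (g w)" by (intro pair_ord) simp_all
      then have "g u = g w" by simp
      then show ?thesis using inj_onD[OF g] u w by blast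
    next
      case False
      then have wI: "w \<notin> I" using same by blast
      have "f u = {(2::nat)^g u}" "f w = {(2::nat)^g w}"
        using False wI by (simp_all add: f_def)
      then have "g u = g w" using eq by simp
      then show ?thesis using inj_onD[OF g] u w by blast
    qed
  qed
  have gpair: "{u,v} = {x,y}" if "u \<in> V" "v \<in> V" "x \<in> V" "y \<in> V" "{g u, g v} = {g x, g y}" for u v x y
  proof -
    have "(g u = g x \<and> g v = g y) \<or> (g u = g y \<and> g v = g x)" using that(5) by (simp add: doubleton_eq_iff)
    then show ?thesis
    proof (elim disjE conjE)
      assume "g u = g x" "g v = g y"
      then have "u = x" "v = y" using inj_onD[OF g] that(1-4) by blast+
      then show ?thesis by simp
    next
      assume "g u = g y" "g v = g x"
      then have "u = y" "v = x" using inj_onD[OF g] that(1-4) by blast+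
      then show ?thesis by (simp add: insert_commute)
    qed
  qed
  have einj: "{u,v} = {x,y}" if e1: "{u,v} \<in> E" and e2: "{x,y} \<in> E" and eq: "sumset (f u) (f v) = sumset (f x) (f y)"
    for u v x y
  proof -
    note d1 = edge2[OF e1] and d2 = edge2[OF e2]
    show ?thesis
    proof (cases "u\<notin>I \<and> v\<notin>I \<and> u\<noteq>v \<and> u\<in>V \<and> v\<in>V \<and> sumset (f u) (f v) = {2^g u + 2^g v}")
      case c1: True
      show ?thesis
      proof (cases "x\<notin>I \<and> y\<notin>I \<and> x\<noteq>y \<and> x\<in>V \<and> y\<in>V \<and> sumset (f x) (f y) = {2^g x + 2^g y}")
        case c2: True
        have "{(2::nat)^g u + 2^g v} = {2^g x + 2^g y}" using c1 c2 eq by metis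
        then have s: "(2::nat)^g u + 2^g v = 2^g x + 2^g y" by simp
        have n1: "g u \<noteq> g v" using c1 inj_on_contraD[OF g] by blast
        have n2: "g x \<noteq> g y" using c2 inj_on_contraD[OF g] by blast
        have "{g u, g v} = {g x, g y}" using sidon[OF n1 n2 s] .
        then show ?thesis using gpair[of u v x y] c1 c2 by blast
      next
        case False
        then obtain p q where pq: "sumset (f x) (f y) = {2^g p + 2^g q, 2^Suc (g p) + 2^g q}" using d2 by blast
        have "{(2::nat)^g u + 2^g v} = {2^g p + 2^g q, 2^Suc (g p) + 2^g q}" using pq c1 eq by metis
        then show ?thesis using sing_pair[OF lt[of "g p" "2^g q"]] by blast
      qed
    next
      case c1: False
      then obtain p q where pq: "{u,v} = {p,q}" "p \<in> I" "q \<notin> I" "p\<in>V" "q\<in>V"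
        "sumset (f u) (f v) = {2^g p + 2^g q, 2^Suc (g p) + 2^g q}" using d1 by blast
      show ?thesis
      proof (cases "x\<notin>I \<and> y\<notin>I \<and> x\<noteq>y \<and> x\<in>V \<and> y\<in>V \<and> sumset (f x) (f y) = {2^g x + 2^g y}")
        case c2: True
        have "{(2::nat)^g x + 2^g y} = {2^g p + 2^g q, 2^Suc (g p) + 2^g q}" using pq(6) c2 eq by metis
        then show ?thesis using sing_pair[OF lt[of "g p" "2^g q"]] by blast
      next
        case False
        then obtain p' q' where pq': "{x,y} = {p',q'}" "p' \<in> I" "q' \<notin> I" "p'\<in>V" "q'\<in>V"
          "sumset (f x) (f y) = {2^g p' + 2^g q', 2^Suc (g p') + 2^g q'}" using d2 by blast
        have "{(2::nat)^g p + 2^g q, 2^Suc (g p) + 2^g q} = {2^g p' + 2^g q', 2^Suc (g p') + 2^g q'}"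
          using pq(6) pq'(6) eq by metis
        then have h: "(2::nat)^g p + 2^g q = 2^g p' + 2^g q'" "(2::nat)^Suc (g p) + 2^g q = 2^Suc (g p') + 2^g q'"
          using pair_ord[OF lt lt] by blast+
        then have "(2::nat)^g p = 2^g p'" unfolding power_Suc by linarith
        then have "g p = g p'" by simp
        moreover have "g q = g q'" using h(1) \<open>g p = g p'\<close> by simp
        ultimately have "p = p'" "q = q'" using g pq pq' unfolding inj_on_def by blast+
        then show ?thesis using pq pq' by simp
      qed
    qed
  qed
  have cardS: "card (sumset (f u) (f w)) = max (card (f u)) (card (f w))" if e: "{u,w} \<in> E" for u w
  proof -
    note d = edge2[OF e]
    show ?thesis
    proof (cases "u\<notin>I \<and> w\<notin>I \<and> u\<noteq>w \<and> u\<in>V \<and> w\<in>V \<and> sumset (f u) (f w) = {2^g u + 2^g w}")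
      case True
      then have "card (sumset (f u) (f w)) = 1" by simp
      moreover have "card (f u) = 1" "card (f w) = 1" using True by (auto simp: f_def)
      ultimately show ?thesis by simp
    next
      case False
      then obtain p q where pq: "{u,w} = {p,q}" "p \<in> I" "q \<notin> I"
        "sumset (f u) (f w) = {2^g p + 2^g q, 2^Suc (g p) + 2^g q}" using d by blast
      have "card (sumset (f u) (f w)) = 2" using pq(4) lt[of "g p" "2^g q"] by simp
      moreover have "max (card (f u)) (card (f w)) = 2"
        using pq(1-3) by (auto simp: f_def doubleton_eq_iff)
      ultimately show ?thesis by simp
    qed
  qed
  have "weak_iasi V E f" unfolding weak_iasi_def iasi_def using injf fin einj cardS by blast
  moreover have "mono_indexed_edges E f \<subseteq> {e\<in>E. e \<inter> I = {}}"
  proof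
    fix e assume "e \<in> mono_indexed_edges E f"
    then obtain u w where e: "e \<in> E" "e = {u,w}" "card (sumset (f u) (f w)) = 1"
      unfolding mono_indexed_edges_def by blast
    note d = edge2[OF e(1)[unfolded e(2)]]
    show "e \<in> {e\<in>E. e \<inter> I = {}}"
    proof (cases "u\<notin>I \<and> w\<notin>I \<and> u\<noteq>w \<and> u\<in>V \<and> w\<in>V \<and> sumset (f u) (f w) = {2^g u + 2^g w}")
      case True
      then show ?thesis using e by auto
    next
      case False
      then obtain p q where pq: "sumset (f u) (f w) = {2^g p + 2^g q, 2^Suc (g p) + 2^g q}" using d by blast
      have "card (sumset (f u) (f w)) = 2" using pq lt[of "g p" "2^g q"] by simp
      then show ?thesis using e by simp
    qed
  qed
  ultimately show ?thesis by blast
qed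



theorem theorem2p12:
  fixes V :: "'a set" and E :: "'a set set"
  assumes "block_graph V E"
  shows "(\<exists>f. weak_iasi V E f) \<and>
         real (sparing_number V E) =
           (1/2) * (\<Sum>W\<in>blocks V E. (real (card W) - 1) * (real (card W) - 2))"
proof -
  have gr: "graph V E" and cV: "connected_on E V" and bcl: "\<forall>W\<in>blocks V E. is_clique E W"
    using assms unfolding block_graph_def by auto
  have finV: "finite V" using gr unfolding graph_def by auto
  have EPow: "E \<subseteq> Pow V" using gr unfolding graph_def by auto
  have finE: "finite E" using EPow finV by (meson finite_Pow_iff finite_subset)
  let ?B = "blocks V E"
  have bsub: "W \<subseteq> V" "nonseparable E W" if "W \<in> ?B" for W
    using that unfolding blocks_def is_block_def by auto
  have bmax: "W' = W" if "W \<in> ?B" "W \<subseteq> W'" "W' \<subseteq> V" "nonseparable E W'" for W W'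
    using that unfolding blocks_def is_block_def by blast
  have "?B \<subseteq> Pow V" using bsub by blast
  then have finB: "finite ?B" using finV by (meson finite_Pow_iff finite_subset)
  have finW: "finite W" if "W \<in> ?B" for W using bsub[OF that] finV finite_subset by blast
  have c2: "2 \<le> card W" if "W \<in> ?B" for W using bsub(2)[OF that] unfolding nonseparable_def by blast
  have bg: "\<forall>W. W \<subseteq> V \<longrightarrow> nonseparable E W \<longrightarrow> is_clique E W"
  proof (intro allI impI)
    fix W assume W: "W \<subseteq> V" "nonseparable E W"
    obtain B where B: "is_block V E B" "W \<subseteq> B" using extend_block[OF finV W] by blast
    then have "is_clique E B" using bcl by (simp add: blocks_def)
    then show "is_clique E W" using B(2) unfolding is_clique_def by blast
  qed
  have Bdisj: "W1 = W2" if W12: "W1 \<in> ?B" "W2 \<in> ?B" and e: "e \<subseteq> W1" "e \<subseteq> W2" "card e = 2" for W1 W2 e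
  proof -
    have fi: "finite (W1 \<inter> W2)" using finW[OF W12(1)] by simp
    have "card e \<le> card (W1 \<inter> W2)" using e fi by (intro card_mono) auto
    then have "2 \<le> card (W1 \<inter> W2)" using e by simp
    moreover have "finite (W1 \<union> W2)" using finW W12 by simp
    ultimately have ns: "nonseparable E (W1 \<union> W2)" using nonsep_union[OF bsub(2)[OF W12(1)] bsub(2)[OF W12(2)] fi] by blast
    have sub: "W1 \<union> W2 \<subseteq> V" using bsub W12 by blast
    have "W1 \<union> W2 = W1" using bmax[OF W12(1) _ sub ns] by blast
    moreover have "W1 \<union> W2 = W2" using bmax[OF W12(2) _ sub ns] by blast
    ultimately show ?thesis by simp
  qed
  have Bedge: "\<exists>W\<in>?B. e \<subseteq> W" if e: "e \<in> E" for e
  proof -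
    obtain u v where uv: "e = {u,v}" "u \<noteq> v" "u \<in> V" "v \<in> V" using graph_edge[OF gr e] by blast
    have "nonseparable E e" using pair_nonsep[of u v E] uv e by simp
    moreover have "e \<subseteq> V" using uv by simp
    ultimately obtain W where "is_block V E W" "e \<subseteq> W" using extend_block[OF finV] by blast
    then show ?thesis by (auto simp: blocks_def)
  qed
  define N where "N = (\<Sum>W\<in>?B. (card W - 1) choose 2)"
  have lower: "N \<le> card (mono_indexed_edges E f)" if wf: "weak_iasi V E f" for f
  proof -
    define S where "S W = {u\<in>W. card (f u) = 1}" for W
    define P where "P W = {e. e \<subseteq> S W \<and> card e = 2}" for W
    have finS: "finite (S W)" if "W \<in> ?B" for W using finW[OF that] by (simp add: S_def)
    have cP: "card (P W) = card (S W) choose 2" if "W \<in> ?B" for W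
      unfolding P_def using n_subsets[OF finS[OF that], of 2] by simp
    have cS: "card W - 1 \<le> card (S W)" if W: "W \<in> ?B" for W
    proof -
      have fD: "finite (W - S W)" using finW[OF W] by simp
      have "\<forall>x\<in>W - S W. \<forall>y\<in>W - S W. x = y"
      proof (intro ballI, rule ccontr)
        fix x y assume x: "x \<in> W - S W" and y: "y \<in> W - S W" and xy: "x \<noteq> y"
        have "{x,y} \<in> E" using bcl W x y xy unfolding is_clique_def by blast
        moreover have "x \<in> V" "y \<in> V" using bsub(1)[OF W] x y by auto
        ultimately have "card (f x) = 1 \<or> card (f y) = 1" using weak_two[OF wf _ _ xy] by blast
        then show False using x y by (auto simp: S_def)
      qed
      then have "card (W - S W) \<le> Suc 0" using card_le_Suc0_iff_eq[OF fD] by blast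
      moreover have "card (W - S W) = card W - card (S W)"
        using card_Diff_subset[OF finS[OF W]] by (auto simp: S_def)
      moreover have "card (S W) \<le> card W" using finW[OF W] by (intro card_mono) (auto simp: S_def)
      ultimately show ?thesis by linarith
    qed
    have finP: "finite (P W)" if "W \<in> ?B" for W
    proof -
      have "P W \<subseteq> Pow (S W)" by (auto simp: P_def)
      then show ?thesis using finS[OF that] by (meson finite_Pow_iff finite_subset)
    qed
    have disj: "\<forall>W1\<in>?B. \<forall>W2\<in>?B. W1 \<noteq> W2 \<longrightarrow> P W1 \<inter> P W2 = {}"
    proof (intro ballI impI)
      fix W1 W2 assume W: "W1 \<in> ?B" "W2 \<in> ?B" "W1 \<noteq> W2"
      show "P W1 \<inter> P W2 = {}"
      proof (rule ccontr)
        assume "P W1 \<inter> P W2 \<noteq> {}"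
        then obtain e where "e \<in> P W1" "e \<in> P W2" by blast
        then have "e \<subseteq> W1" "e \<subseteq> W2" "card e = 2" by (auto simp: P_def S_def)
        then show False using Bdisj[OF W(1,2)] W(3) by blast
      qed
    qed
    have un: "card (\<Union>(P ` ?B)) = (\<Sum>W\<in>?B. card (P W))"
      using card_UN_disjoint[OF finB _ disj] finP by blast
    have sub: "\<Union>(P ` ?B) \<subseteq> mono_indexed_edges E f"
    proof
      fix e assume "e \<in> \<Union>(P ` ?B)"
      then obtain W where W: "W \<in> ?B" and e: "e \<subseteq> S W" "card e = 2" by (auto simp: P_def)
      obtain u w where uw: "e = {u,w}" "u \<noteq> w" using e(2) card_2_iff by metis
      have uS: "u \<in> S W" and wS: "w \<in> S W" using e uw by auto
      have "{u,w} \<in> E" using bcl W uS wS uw(2) unfolding is_clique_def S_def by blast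
      moreover obtain p where p: "f u = {p}" using uS by (auto simp: S_def card_1_singleton_iff)
      moreover obtain q where q: "f w = {q}" using wS by (auto simp: S_def card_1_singleton_iff)
      ultimately have "{u,w} \<in> E" "card (sumset (f u) (f w)) = 1" by (simp_all add: sumset_single_l)
      then show "e \<in> mono_indexed_edges E f" unfolding mono_indexed_edges_def using uw by blast
    qed
    have finM: "finite (mono_indexed_edges E f)" using finE by (simp add: mono_indexed_edges_def)
    have "N \<le> (\<Sum>W\<in>?B. card (P W))"
      unfolding N_def
    proof (rule sum_mono)
      fix W assume W: "W \<in> ?B"
      show "(card W - 1) choose 2 \<le> card (P W)" using cP[OF W] cS[OF W] binomial_right_mono by simp
    qed
    also have "\<dots> = card (\<Union>(P ` ?B))" using un by simp
    also have "\<dots> \<le> card (mono_indexed_edges E f)" using card_mono[OF finM sub] .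
    finally show ?thesis .
  qed
  obtain I where I: "I \<subseteq> V" "indep E I" "\<forall>K. maxclique E V K \<and> 2 \<le> card K \<longrightarrow> K \<inter> I \<noteq> {}"
    using hitting[OF finV cV bg] by blast
  have BI: "W \<inter> I \<noteq> {}" if W: "W \<in> ?B" for W
  proof -
    have "maxclique E V W" unfolding maxclique_def
    proof (intro conjI allI impI)
      show "W \<subseteq> V" using bsub[OF W] by blast
      show "is_clique E W" using bcl W by blast
      fix K' assume K': "W \<subseteq> K' \<and> K' \<subseteq> V \<and> is_clique E K'"
      have fK: "finite K'" using K' finV finite_subset by blast
      have "card W \<le> card K'" using K' fK by (intro card_mono) auto
      then have "2 \<le> card K'" using c2[OF W] by simp
      then have "nonseparable E K'" using clique_nonsep K' fK by blast
      then show "K' = W" using bmax[OF W] K' by blast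
    qed
    then show ?thesis using I(3) c2[OF W] by blast
  qed
  obtain g :: "'a \<Rightarrow> nat" and n where g: "inj_on g V" using finite_imp_inj_to_nat_seg[OF finV] by blast
  define f where "f = (\<lambda>v. if v \<in> I then {(2::nat)^g v, 2^Suc (g v)} else {2^g v})"
  have lab: "weak_iasi V E f \<and> mono_indexed_edges E f \<subseteq> {e\<in>E. e \<inter> I = {}}"
    using labeling[OF gr I(1) I(2) g] unfolding f_def by blast
  have upper: "card (mono_indexed_edges E f) \<le> N"
  proof -
    define Q where "Q W = {e. e \<subseteq> W - I \<and> card e = 2}" for W
    have finQ: "finite (Q W)" if "W \<in> ?B" for W
    proof -
      have "Q W \<subseteq> Pow W" by (auto simp: Q_def)
      then show ?thesis using finW[OF that] by (meson finite_Pow_iff finite_subset)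
    qed
    have sub: "mono_indexed_edges E f \<subseteq> \<Union>(Q ` ?B)"
    proof
      fix e assume "e \<in> mono_indexed_edges E f"
      then have e: "e \<in> E" "e \<inter> I = {}" using lab by blast+
      obtain W where W: "W \<in> ?B" "e \<subseteq> W" using Bedge[OF e(1)] by blast
      obtain u v where uv: "e = {u,v}" "u \<noteq> v" using graph_edge[OF gr e(1)] by blast
      have "card e = 2" using uv by simp
      then have "e \<in> Q W" using W e by (auto simp: Q_def)
      then show "e \<in> \<Union>(Q ` ?B)" using W by blast
    qed
    have finU: "finite (\<Union>(Q ` ?B))" using finB finQ by blast
    have "card (mono_indexed_edges E f) \<le> card (\<Union>(Q ` ?B))" using card_mono[OF finU sub] .
    also have "\<dots> \<le> (\<Sum>W\<in>?B. card (Q W))" using card_UN_le[OF finB] .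
    also have "\<dots> \<le> N"
      unfolding N_def
    proof (rule sum_mono)
      fix W assume W: "W \<in> ?B"
      have fWI: "finite (W - I)" using finW[OF W] by simp
      have cQ: "card (Q W) = card (W - I) choose 2" unfolding Q_def using n_subsets[OF fWI, of 2] by simp
      have "W - I \<subset> W" using BI[OF W] by blast
      then have "card (W - I) < card W" using finW[OF W] by (simp add: psubset_card_mono)
      then have "card (W - I) \<le> card W - 1" by simp
      then show "card (Q W) \<le> (card W - 1) choose 2" using cQ binomial_right_mono by simp
    qed
    finally show ?thesis .
  qed
  have eqN: "card (mono_indexed_edges E f) = N" using lower[of f] lab upper by simp
  have sp: "sparing_number V E = N"
    unfolding sparing_number_def
  proof (rule Least_equality)
    show "\<exists>f. weak_iasi V E f \<and> card (mono_indexed_edges E f) = N" using lab eqN by blast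
  next
    fix y assume "\<exists>f. weak_iasi V E f \<and> card (mono_indexed_edges E f) = y"
    then show "N \<le> y" using lower by blast
  qed
  have "real N = (\<Sum>W\<in>?B. real ((card W - 1) choose 2))" unfolding N_def by simp
  also have "\<dots> = (\<Sum>W\<in>?B. (real (card W) - 1) * (real (card W) - 2) / 2)"
    using choose_real c2 by (intro sum.cong) auto
  also have "\<dots> = (1/2) * (\<Sum>W\<in>?B. (real (card W) - 1) * (real (card W) - 2))"
    by (simp add: sum_divide_distrib)
  finally show ?thesis using sp lab by auto
qed

end
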